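(* If $A\in\mathsf{M}_n(\mathbb{C})$ is $h$-cyclic and nonsingular, then $h$ divides $n$.
   Context: The digraph $\Gamma_A$ of $A=[a_{ij}]\in\mathsf{M}_n(\mathbb{C})$ has vertex set $\{1,\dots,n\}$ and arc set $\{(i,j): a_{ij}\neq 0\}$. $A$ is $h$-cyclic if there is a partition $P=\{V_1,\dots,V_h\}$ of $\{1,\dots,n\}$ into $h$ nonempty parts such that for every arc $(i,j)$ of $\Gamma_A$ there is $\ell\in\{1,\dots,h\}$ with $i\in V_\ell$ and $j\in V_{\ell+1}$, where $V_{h+1}:=V_1$. *)

theory Defs
  imports "Jordan_Normal_Form.Determinant"
begin

text \<open>Vertices of the digraph of an n x n matrix are 0,...,n-1 (0-based indexing).\<close>

definition digraph_arcs :: "complex mat \<Rightarrow> (nat \<times> nat) set" where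
  "digraph_arcs A = {(i, j). i < dim_row A \<and> j < dim_col A \<and> A $$ (i, j) \<noteq> 0}"

definition h_cyclic :: "complex mat \<Rightarrow> nat \<Rightarrow> bool" where
  "h_cyclic A h \<longleftrightarrow> (\<exists>V :: nat \<Rightarrow> nat set.
     (\<forall>l<h. V l \<noteq> {}) \<and>
     (\<Union>l<h. V l) = {..<dim_row A} \<and>
     (\<forall>l<h. \<forall>l'<h. l \<noteq> l' \<longrightarrow> V l \<inter> V l' = {}) \<and>
     (\<forall>(i, j) \<in> digraph_arcs A. \<exists>l<h. i \<in> V l \<and> j \<in> V ((l + 1) mod h)))"

end

theory Submission
  imports Defs
begin

lemma det_nonzero_perm:
  fixes A :: "complex mat"
  assumes "A \<in> carrier_mat n n" "det A \<noteq> 0"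
  shows "\<exists>p. p permutes {0..<n} \<and> (\<forall>i<n. A $$ (i, p i) \<noteq> 0)"
proof (rule ccontr)
  assume c: "\<not> ?thesis"
  have "det A = (\<Sum> p \<in> {p. p permutes {0 ..< n}}.
     signof p * (\<Prod> i = 0 ..< n. A $$ (i, p i)))"
    using assms(1) unfolding det_def by auto
  also have "\<dots> = 0"
  proof (rule sum.neutral, clarify)
    fix p assume "p permutes {0..<n}"
    with c obtain i where "i < n" "A $$ (i, p i) = 0" by blast
    then have "(\<Prod> i = 0 ..< n. A $$ (i, p i)) = 0"
      by (intro prod_zero) auto
    then show "signof p * (\<Prod> i = 0 ..< n. A $$ (i, p i)) = 0" by simp
  qed
  finally show False using assms(2) by simp
qed

theorem corollary3p2:
  fixes A :: "complex mat" and n h :: nat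
  assumes "A \<in> carrier_mat n n"
    and "h_cyclic A h"
    and "det A \<noteq> 0"
  shows "h dvd n"
proof -
  have dr: "dim_row A = n" "dim_col A = n" using assms(1) by auto
  obtain V :: "nat \<Rightarrow> nat set" where
    ne: "\<forall>l<h. V l \<noteq> {}" and un: "(\<Union>l<h. V l) = {..<n}" and
    dj: "\<forall>l<h. \<forall>l'<h. l \<noteq> l' \<longrightarrow> V l \<inter> V l' = {}" and
    ar: "\<forall>(i, j) \<in> digraph_arcs A. \<exists>l<h. i \<in> V l \<and> j \<in> V ((l + 1) mod h)"
    using assms(2) dr unfolding h_cyclic_def by auto
  show ?thesis
  proof (cases "h = 0")
    case True
    then have "n = 0" using un by auto
    then show ?thesis by simp
  next
    case hpos: False
    obtain p where pp: "p permutes {0..<n}" and pa: "\<forall>i<n. A $$ (i, p i) \<noteq> 0"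
      using det_nonzero_perm[OF assms(1) assms(3)] by blast
    have injp: "inj p" using pp permutes_inj by blast
    have sub: "V l \<subseteq> {..<n}" if "l < h" for l using un that by blast
    have fin: "finite (V l)" if "l < h" for l using sub[OF that] finite_subset finite_lessThan by metis
    have maps: "p ` V l \<subseteq> V ((l + 1) mod h)" if "l < h" for l
    proof
      fix y assume "y \<in> p ` V l"
      then obtain i where i: "i \<in> V l" "y = p i" by blast
      have "i < n" using sub[OF that] i by auto
      then have "p i < n" using pp by (metis atLeastLessThan_iff permutes_in_image zero_le)
      then have "(i, p i) \<in> digraph_arcs A" using pa \<open>i < n\<close> dr unfolding digraph_arcs_def by auto
      then obtain l' where l': "l' < h" "i \<in> V l'" "p i \<in> V ((l' + 1) mod h)" using ar by blast
      have "l' = l" using dj l' i that by blast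
      then show "y \<in> V ((l + 1) mod h)" using l' i by simp
    qed
    have le: "card (V l) \<le> card (V ((l + 1) mod h))" if "l < h" for l
    proof -
      have "card (V l) = card (p ` V l)" using injp by (simp add: card_image inj_on_subset)
      also have "\<dots> \<le> card (V ((l + 1) mod h))"
        using maps[OF that] fin hpos by (intro card_mono) auto
      finally show ?thesis .
    qed
    have up: "card (V 0) \<le> card (V l)" if "l < h" for l
      using that
    proof (induction l)
      case 0 then show ?case by simp
    next
      case (Suc l)
      then have "card (V l) \<le> card (V (Suc l))" using le[of l] by simp
      with Suc show ?case by simp
    qed
    have down: "card (V l) \<le> card (V (h - 1))" if "l < h" for l
    proof -
      have "l \<le> h - 1" using that by simp
      then show ?thesis
      proof (induction rule: inc_induct)
        case base then show ?case by simp
      next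
        case (step m)
        have "card (V m) \<le> card (V (Suc m))" using le[of m] step.hyps by simp
        with step.IH show ?case by simp
      qed
    qed
    have last: "card (V (h - 1)) \<le> card (V 0)"
      using le[of "h - 1"] hpos by simp
    have eq: "card (V l) = card (V 0)" if "l < h" for l
      using up[OF that] down[OF that] last by linarith
    have "n = card (\<Union>l<h. V l)" using un by simp
    also have "\<dots> = (\<Sum>l<h. card (V l))"
      using fin dj by (intro card_UN_disjoint) auto
    also have "\<dots> = (\<Sum>l<h. card (V 0))" proof (rule sum.cong)
      fix l assume "l \<in> {..<h}"
      then have "l < h" by simp
      then show "card (V l) = card (V 0)" by (rule eq)
    qed simp
    also have "\<dots> = h * card (V 0)" by simp
    finally show ?thesis by simp
  qed
qed

end
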